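(* Let $X=[x_1,\dots,x_m]\in\mathbb{R}^{d_x\times m}$ be a data matrix and $Y\in\mathbb{R}^{d_y\times m}$ a label matrix, and let $\tilde X=\begin{bmatrix}X^T & \mathbf{1}_m\end{bmatrix}^T\in\mathbb{R}^{(d_x+1)\times m}$. For a function $h:\mathbb{R}\to\mathbb{R}$ applied entrywise, consider the empirical risk of the one-hidden-layer network $$\ell(W_1,W_2,b_1,b_2)=\tfrac12\big\|W_2\,h(W_1X+b_1\mathbf{1}_m^T)+b_2\mathbf{1}_m^T-Y\big\|_F^2,$$ with $W_1\in\mathbb{R}^{d_1\times d_x}$, $b_1\in\mathbb{R}^{d_1}$, $W_2\in\mathbb{R}^{d_y\times d_1}$, $b_2\in\mathbb{R}^{d_y}$. Suppose that: (1) $d_y=1$, and there is no matrix $R\in\mathbb{R}^{1\times(d_x+1)}$ with $Y=R\tilde X$; (2) the data points $x_1,\dots,x_m$ are pairwise distinct; (3) $h(x)=\max\{s_+x,0\}+\min\{s_-x,0\}$ for constants $s_+>0$, $s_-\ge 0$, $s_+\neq s_-$; (4) $d_1\ge 2$. Then $\ell$ has a local minimum that is not a global minimum (a spurious local minimum) whose risk equals the linear least squares risk $\min_{R\in\mathbb{R}^{1\times(d_x+1)}}\tfrac12\|R\tilde X-Y\|_F^2$. Moreover, there are infinitely many such local minima.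
   Context: $\mathbf{1}_m$ denotes the all-ones column vector in $\mathbb{R}^m$, and $\|\cdot\|_F$ the Frobenius norm. A spurious local minimum is a local minimum of $\ell$ at which $\ell$ is strictly larger than its infimum over all parameters. *)

theory Defs
  imports "HOL-Analysis.Analysis"
begin

text \<open>Data matrix X has rows indexed by 'dx (coordinates) and columns indexed by 'm
(data points); Y is the 1 x m label matrix (d_y = 1), represented as a vector in real^'m.\<close>

definition leaky :: "real \<Rightarrow> real \<Rightarrow> real \<Rightarrow> real" where
  "leaky sp sm x = max (sp * x) 0 + min (sm * x) 0"

definition risk ::
  "(real \<Rightarrow> real) \<Rightarrow> real^'m^'dx \<Rightarrow> real^'m \<Rightarrow>
   (real^'dx^'d1) \<times> (real^'d1) \<times> (real^'d1) \<times> real \<Rightarrow> real" where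
  "risk h X Y p = (case p of (W1, b1, W2, b2) \<Rightarrow>
     (1/2) * (norm (W2 v* (\<chi> k j. h ((W1 ** X) $ k $ j + b1 $ k)) + (\<chi> j. b2) - Y))\<^sup>2)"

text \<open>Linear least squares risk: R = [w, c] with R Xtilde = w X + c 1^T.\<close>
definition ls_risk :: "real^'m^'dx \<Rightarrow> real^'m \<Rightarrow> real" where
  "ls_risk X Y = Inf {(1/2) * (norm (w v* X + (\<chi> j. c) - Y))\<^sup>2 | (w :: real^'dx) (c :: real). True}"

definition is_local_min :: "('a::topological_space \<Rightarrow> real) \<Rightarrow> 'a \<Rightarrow> bool" where
  "is_local_min f p \<longleftrightarrow> (\<exists>U. open U \<and> p \<in> U \<and> (\<forall>q\<in>U. f p \<le> f q))"

definition is_spurious_local_min :: "('a::topological_space \<Rightarrow> real) \<Rightarrow> 'a \<Rightarrow> bool" where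
  "is_spurious_local_min f p \<longleftrightarrow> is_local_min f p \<and> f p > (INF q. f q)"

end

theory Submission
  imports Defs
begin


lemma orth_of_min:
  fixes r s :: "'a::real_inner"
  assumes "\<And>e::real. norm r \<le> norm (e *\<^sub>R s - r)"
  shows "inner s r = 0"
proof (rule ccontr)
  assume nz: "inner s r \<noteq> 0"
  hence s0: "s \<noteq> 0" by auto
  define a where "a = inner s s"
  define b where "b = inner s r"
  have a0: "a > 0" using s0 by (simp add: a_def)
  define e where "e = b / a"
  have "(norm r)\<^sup>2 \<le> (norm (e *\<^sub>R s - r))\<^sup>2" using assms[of e] by (simp add: power_mono)
  also have "\<dots> = e*e*a - 2*e*b + (norm r)\<^sup>2"
    by (simp add: power2_norm_eq_inner inner_diff_left inner_diff_right a_def b_def inner_commute algebra_simps)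
  finally have "0 \<le> e*e*a - 2*e*b" by simp
  also have "e*e*a - 2*e*b = - (b*b/a)" using a0 by (simp add: e_def field_simps power2_eq_square)
  finally have "b*b/a \<le> 0" by simp
  moreover have "b*b > 0" using nz b_def by (auto simp add: zero_less_mult_iff linorder_neq_iff)
  hence "b*b/a > 0" using a0 by simp
  ultimately show False by simp
qed

definition Sfit :: "real^'m^'dx \<Rightarrow> (real^'m) set" where
  "Sfit X = {w v* X + (\<chi> j. c) | (w::real^'dx) c. True}"

lemma subspace_Sfit: fixes X :: "real^'m^'dx" shows "subspace (Sfit X)"
  unfolding subspace_def Sfit_def
proof (intro conjI ballI allI)
  show "0 \<in> {w v* X + (\<chi> j. c) | (w::real^'dx) c. True}"
    by (rule CollectI, rule exI[of _ 0], rule exI[of _ 0]) (simp add: vec_eq_iff vector_matrix_mult_def)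
next
  fix x y assume "x \<in> {w v* X + (\<chi> j. c) | (w::real^'dx) c. True}" "y \<in> {w v* X + (\<chi> j. c) | (w::real^'dx) c. True}"
  then obtain w1 c1 w2 c2 where "x = w1 v* X + (\<chi> j. c1)" "y = (w2::real^'dx) v* X + (\<chi> j. c2)" by auto
  thus "x + y \<in> {w v* X + (\<chi> j. c) | (w::real^'dx) c. True}"
    by (intro CollectI exI[of _ "w1+w2"] exI[of _ "c1+c2"]) (simp add: vec_eq_iff vector_matrix_mult_def sum.distrib algebra_simps)
next
  fix x and a::real assume "x \<in> {w v* X + (\<chi> j. c) | (w::real^'dx) c. True}"
  then obtain w1 c1 where "x = (w1::real^'dx) v* X + (\<chi> j. c1)" by auto
  thus "a *\<^sub>R x \<in> {w v* X + (\<chi> j. c) | (w::real^'dx) c. True}"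
    by (intro CollectI exI[of _ "a *\<^sub>R w1"] exI[of _ "a*c1"]) (simp add: vec_eq_iff vector_matrix_mult_def sum_distrib_left algebra_simps)
qed

lemma lsq_exists:
  fixes X :: "real^'m^'dx" and Y :: "real^'m"
  obtains w c where "\<And>w' c'. norm (w v* X + (\<chi> j. c) - Y) \<le> norm (w' v* X + (\<chi> j. c') - Y)"
proof -
  have "closed (Sfit X)" by (rule closed_subspace[OF subspace_Sfit])
  moreover have "Sfit X \<noteq> {}" unfolding Sfit_def by auto
  ultimately obtain yh where yh: "yh \<in> Sfit X" "\<And>z. z \<in> Sfit X \<Longrightarrow> dist Y yh \<le> dist Y z"
    using distance_attains_inf by blast
  from yh(1) obtain w c where wc: "yh = w v* X + (\<chi> j. c)" unfolding Sfit_def by auto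
  show ?thesis
  proof (rule that[of w c])
    fix w' c'
    have "w' v* X + (\<chi> j. c') \<in> Sfit X" unfolding Sfit_def by auto
    from yh(2)[OF this] wc show "norm (w v* X + (\<chi> j. c) - Y) \<le> norm (w' v* X + (\<chi> j. c') - Y)"
      by (simp add: dist_norm norm_minus_commute)
  qed
qed



lemma leaky_pos: "sm \<ge> 0 \<Longrightarrow> sp > 0 \<Longrightarrow> z > 0 \<Longrightarrow> leaky sp sm z = sp * z"
proof -
  assume a: "sm \<ge> 0" "sp > 0" "z > 0"
  hence "sp * z > 0" "sm * z \<ge> 0" by auto
  thus ?thesis unfolding leaky_def by (simp add: max_absorb1 min_absorb2)
qed

lemma lin_region:
  fixes X :: "real^'m^'dx" and W1 :: "real^'dx^'d1"
  assumes "sp > 0" "sm \<ge> 0" "\<forall>k j. 0 < (W1 ** X)$k$j + b1$k"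
  shows "risk (leaky sp sm) X Y (W1,b1,W2,b2) =
     (1/2) * (norm ((\<chi> i. \<Sum>k\<in>UNIV. W2$k * sp * W1$k$i) v* X + (\<chi> j. (\<Sum>k\<in>UNIV. W2$k * sp * b1$k) + b2) - Y))\<^sup>2"
proof -
  have "W2 v* (\<chi> k j. leaky sp sm ((W1 ** X) $ k $ j + b1 $ k)) + (\<chi> j. b2) =
        (\<chi> i. \<Sum>k\<in>UNIV. W2$k * sp * W1$k$i) v* X + (\<chi> j. (\<Sum>k\<in>UNIV. W2$k * sp * b1$k) + b2)"
  proof (subst vec_eq_iff, intro allI)
    fix j
    have "(W2 v* (\<chi> k j. leaky sp sm ((W1 ** X) $ k $ j + b1 $ k)))$j
       = (\<Sum>k\<in>UNIV. W2$k * (sp * ((\<Sum>i\<in>UNIV. W1$k$i * X$i$j) + b1$k)))"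
      using assms by (simp add: vector_matrix_mult_def leaky_pos matrix_matrix_mult_def)
    also have "\<dots> = (\<Sum>k\<in>UNIV. \<Sum>i\<in>UNIV. W2$k * sp * W1$k$i * X$i$j) + (\<Sum>k\<in>UNIV. W2$k * sp * b1$k)"
      by (simp add: sum.distrib sum_distrib_left algebra_simps)
    also have "\<dots> = (\<Sum>i\<in>UNIV. (\<Sum>k\<in>UNIV. W2$k * sp * W1$k$i) * X$i$j) + (\<Sum>k\<in>UNIV. W2$k * sp * b1$k)"
      by (subst sum.swap) (simp add: sum_distrib_right)
    finally show "(W2 v* (\<chi> k j. leaky sp sm ((W1 ** X) $ k $ j + b1 $ k)) + (\<chi> j. b2))$j =
        ((\<chi> i. \<Sum>k\<in>UNIV. W2$k * sp * W1$k$i) v* X + (\<chi> j. (\<Sum>k\<in>UNIV. W2$k * sp * b1$k) + b2))$j"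
      by (simp add: vector_matrix_mult_def)
  qed
  thus ?thesis unfolding risk_def by simp
qed

lemma open_region:
  fixes X :: "real^'m^'dx"
  shows "open {q :: (real^'dx^'d1) \<times> (real^'d1) \<times> (real^'d1) \<times> real.
                \<forall>k j. 0 < (fst q ** X)$k$j + fst (snd q) $k}"
proof -
  have eq: "{q :: (real^'dx^'d1) \<times> (real^'d1) \<times> (real^'d1) \<times> real.
                \<forall>k j. 0 < (fst q ** X)$k$j + fst (snd q) $k}
     = (\<Inter>k\<in>UNIV. \<Inter>j\<in>UNIV. {q. (\<lambda>q. 0) q < (\<lambda>q. (\<Sum>i\<in>UNIV. fst q $ k $ i * X$i$j) + fst (snd q) $k) q})"
    by (auto simp: matrix_matrix_mult_def)
  show ?thesis unfolding eq
    by (intro open_INT ballI finite open_Collect_less continuous_intros)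
qed



lemma two_elems: assumes "CARD('d) \<ge> 2" obtains k1 k2 :: "'d::finite" where "k1 \<noteq> k2"
proof -
  have "\<exists>k1 k2 :: 'd. k1 \<noteq> k2"
  proof (rule ccontr)
    assume "\<not> ?thesis"
    hence u: "(UNIV :: 'd set) = {undefined}" by auto
    have "CARD('d) = 1" by (subst u) simp
    with assms show False by simp
  qed
  thus ?thesis using that by blast
qed

lemma sum_two:
  fixes a b :: real
  assumes "k1 \<noteq> (k2::'d::finite)"
  shows "(\<Sum>k\<in>UNIV. if k = k2 then a else if k = k1 then b else 0) = a + b"
proof -
  have "(\<Sum>k\<in>UNIV. if k = k2 then a else if k = k1 then b else 0) =
        (\<Sum>k\<in>UNIV. (if k = k2 then a else 0) + (if k = k1 then b else 0))"
    by (rule sum.cong) (use assms in auto)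
  also have "\<dots> = a + b" by (simp add: sum.distrib)
  finally show ?thesis .
qed

lemma leaky_split: assumes "sm \<ge> 0" "sp \<ge> 0" shows "leaky sp sm z = sm * z + (sp - sm) * max z 0"
proof (cases "z \<ge> 0")
  case True
  hence "sp * z \<ge> 0" "sm * z \<ge> 0" using assms by auto
  thus ?thesis unfolding leaky_def using True by (simp add: max_absorb1 min_absorb2 algebra_simps)
next
  case False
  hence "sp * z \<le> 0" "sm * z \<le> 0" using assms by (auto simp: mult_nonneg_nonpos)
  thus ?thesis unfolding leaky_def using False by (simp add: max_absorb2 min_absorb1 algebra_simps)
qed

lemma vm_inner: "((u::real^'dx) v* (X::real^'m^'dx)) $ j = inner u (column j X)"
  by (simp add: vector_matrix_mult_def column_def inner_vec_def mult.commute)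


theorem theorem1:
  fixes X :: "real^'m^'dx" and Y :: "real^'m"
    and sp sm :: real
  assumes not_linear: "\<not> (\<exists>(w :: real^'dx) (c :: real). Y = w v* X + (\<chi> j. c))"
    and distinct: "inj (\<lambda>j. column j X)"
    and sp: "sp > 0" and sm: "sm \<ge> 0" and neq: "sp \<noteq> sm"
    and d1: "CARD('d1::finite) \<ge> 2"
  shows "infinite {p :: (real^'dx^'d1) \<times> (real^'d1) \<times> (real^'d1) \<times> real.
            is_spurious_local_min (risk (leaky sp sm) X Y) p
            \<and> risk (leaky sp sm) X Y p = ls_risk X Y}"
proof -
  obtain w0 c0 where wc0: "\<And>w' c'. norm (w0 v* X + (\<chi> j. c0) - Y) \<le> norm (w' v* X + (\<chi> j. c') - Y)"
    using lsq_exists by blast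
  define yh where "yh = w0 v* X + (\<chi> j. c0)"
  define r where "r = Y - yh"
  have nr: "norm (yh - Y) = norm r" by (simp add: r_def norm_minus_commute)
  have orth: "inner (w v* X + (\<chi> j. c)) r = 0" for w c
  proof (rule orth_of_min)
    fix e :: real
    have "e *\<^sub>R (w v* X + (\<chi> j. c)) - r = (w0 + e *\<^sub>R w) v* X + (\<chi> j. c0 + e * c) - Y"
      by (simp add: r_def yh_def vec_eq_iff vector_matrix_mult_def sum.distrib sum_distrib_left algebra_simps)
    thus "norm r \<le> norm (e *\<^sub>R (w v* X + (\<chi> j. c)) - r)" using wc0[of "w0 + e *\<^sub>R w" "c0 + e*c"] nr
      by (simp add: yh_def)
  qed
  have lsr: "ls_risk X Y = (1/2) * (norm r)\<^sup>2"
    unfolding ls_risk_def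
  proof (rule cInf_eq_minimum)
    show "(1/2) * (norm r)\<^sup>2 \<in> {(1/2) * (norm (w v* X + (\<chi> j. c) - Y))\<^sup>2 | (w :: real^'dx) (c :: real). True}"
    proof -
      have "(1/2) * (norm r)\<^sup>2 = (1/2) * (norm (w0 v* X + (\<chi> j. c0) - Y))\<^sup>2" using nr by (simp add: yh_def)
      thus ?thesis by blast
    qed
  next
    fix x assume "x \<in> {(1/2) * (norm (w v* X + (\<chi> j. c) - Y))\<^sup>2 | (w :: real^'dx) (c :: real). True}"
    then obtain w c where x: "x = (1/2) * (norm (w v* X + (\<chi> j. c) - Y))\<^sup>2" by auto
    have "norm r \<le> norm (w v* X + (\<chi> j. c) - Y)" using wc0[of w c] nr by (simp add: yh_def)
    hence "(norm r)\<^sup>2 \<le> (norm (w v* X + (\<chi> j. c) - Y))\<^sup>2" by (simp add: power_mono)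
    thus "(1/2) * (norm r)\<^sup>2 \<le> x" using x by simp
  qed
  have r0: "r \<noteq> 0"
  proof
    assume "r = 0"
    hence "Y = w0 v* X + (\<chi> j. c0)" by (simp add: r_def yh_def)
    thus False using not_linear by blast
  qed
  define rsk :: "(real^'dx^'d1) \<times> (real^'d1) \<times> (real^'d1) \<times> real \<Rightarrow> real" where "rsk = risk (leaky sp sm) X Y"
  have rsk_nn: "rsk q \<ge> 0" for q unfolding rsk_def risk_def by (simp split: prod.splits)
  obtain k1 k2 :: 'd1 where k12: "k1 \<noteq> k2" using two_elems[OF d1] by blast
  define A where "A = {j. r$j \<noteq> 0}"
  have A_ne: "A \<noteq> {}" using r0 by (auto simp: A_def vec_eq_iff)
  have A_fin: "finite A" by simp
  define nm where "nm = (\<lambda>j. norm (column j X))"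
  have "Max (nm ` A) \<in> nm ` A" using A_ne A_fin by (intro Max_in) auto
  then obtain js where js: "js \<in> A" "nm js = Max (nm ` A)" by auto
  have js_max: "nm j \<le> nm js" if "j \<in> A" for j using js(2) that A_fin by simp
  define xs where "xs = column js X"
  define u where "u = 2 *\<^sub>R xs"
  define b0 where "b0 = - (norm xs)\<^sup>2"
  define z where "z = u v* X + (\<chi> j. b0)"
  define Mz where "Mz = (norm xs)\<^sup>2"
  have zj: "z$j = 2 * inner xs (column j X) - (norm xs)\<^sup>2" for j
    by (simp add: z_def vm_inner u_def b0_def)
  have zjs: "z$js = Mz" by (simp add: zj Mz_def xs_def power2_norm_eq_inner)
  have zlt: "z$j < Mz" if "j \<in> A" "j \<noteq> js" for j
  proof -
    have ne: "column j X \<noteq> xs" using distinct that(2) unfolding xs_def inj_def by blast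
    have "0 < (norm (column j X - xs))\<^sup>2" using ne by simp
    also have "(norm (column j X - xs))\<^sup>2 = (norm (column j X))\<^sup>2 - 2 * inner xs (column j X) + (norm xs)\<^sup>2"
      by (simp add: power2_norm_eq_inner inner_diff_left inner_diff_right inner_commute)
    finally have a: "2 * inner xs (column j X) < (norm (column j X))\<^sup>2 + (norm xs)\<^sup>2" by simp
    have "(norm (column j X))\<^sup>2 \<le> (norm xs)\<^sup>2" using js_max[OF that(1)] unfolding nm_def xs_def
      by (intro power_mono) auto
    thus ?thesis using a unfolding zj Mz_def by linarith
  qed
  define T where "T = (\<lambda>j. z$j) ` (A - {js})"
  define t where "t = (if T = {} then Mz - 1 else (Mz + Max T)/2)"
  have T_fin: "finite T" unfolding T_def by simp
  have T_lt: "\<forall>y\<in>T. y < Mz" using zlt unfolding T_def by auto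
  have t_lt: "t < Mz"
  proof (cases "T = {}")
    case False
    hence "Max T \<in> T" using T_fin by simp
    thus ?thesis using T_lt False by (simp add: t_def)
  qed (simp add: t_def)
  have zt: "z$j < t" if "j \<in> A" "j \<noteq> js" for j
  proof -
    have T: "z$j \<in> T" "T \<noteq> {}" using that unfolding T_def by auto
    hence "z$j \<le> Max T" using T_fin by simp
    moreover have "Max T < Mz" using T_lt T T_fin by simp
    ultimately show ?thesis using T by (simp add: t_def)
  qed
  define g where "g = (\<chi> j. leaky sp sm (z$j - t))"
  define phi where "phi = (\<chi> j. max (z$j - t) 0)"
  have g_split: "g = sm *\<^sub>R (u v* X + (\<chi> j. b0 - t)) + (sp - sm) *\<^sub>R phi"
    using sm sp by (simp add: g_def phi_def vec_eq_iff leaky_split z_def)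
  have phi_r: "inner phi r = r$js * (Mz - t)"
  proof -
    have "inner phi r = (\<Sum>j\<in>UNIV. if j = js then r$js * (Mz - t) else 0)"
      unfolding inner_vec_def
    proof (rule sum.cong)
      fix j assume "j \<in> (UNIV::'m set)"
      show "inner (phi$j) (r$j) = (if j = js then r$js * (Mz - t) else 0)"
      proof (cases "j = js")
        case True thus ?thesis using t_lt zjs by (simp add: phi_def)
      next
        case False
        show ?thesis
        proof (cases "j \<in> A")
          case True thus ?thesis using zt[OF True False] False by (simp add: phi_def)
        next
          case nA: False thus ?thesis using False by (simp add: phi_def A_def)
        qed
      qed
    qed simp
    thus ?thesis by simp
  qed
  have g_r: "inner g r = (sp - sm) * (r$js * (Mz - t))"
    using orth[of "u" "b0 - t"] phi_r by (simp add: g_split inner_add_left)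
  have g_r0: "inner g r \<noteq> 0" using neq js(1) t_lt by (simp add: g_r A_def)
  have "\<exists>e. norm (e *\<^sub>R g - r) < norm r"
  proof (rule ccontr)
    assume "\<not> ?thesis"
    hence "\<And>e. norm r \<le> norm (e *\<^sub>R g - r)" by (simp add: not_less)
    hence "inner g r = 0" by (rule orth_of_min)
    thus False using g_r0 by simp
  qed
  then obtain e where e: "norm (e *\<^sub>R g - r) < norm r" by blast
  define bt where "bt = norm yh + 1"
  have yhpos: "yh$j + bt > 0" for j
    using component_le_norm_cart[of yh j] by (simp add: bt_def)
  define q where "q = ((\<chi> k. if k = k2 then u else w0) :: real^'dx^'d1,
                     (\<chi> k. if k = k2 then b0 - t else c0 + bt) :: real^'d1,
                     (\<chi> k. if k = k2 then e else if k = k1 then 1/sp else 0) :: real^'d1, - bt)"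
  have "rsk q = (1/2) * (norm (e *\<^sub>R g - r))\<^sup>2"
  proof -
    define W1q where "W1q = ((\<chi> k. if k = k2 then u else w0) :: real^'dx^'d1)"
    define b1q where "b1q = ((\<chi> k. if k = k2 then b0 - t else c0 + bt) :: real^'d1)"
    define W2q where "W2q = ((\<chi> k. if k = k2 then e else if k = k1 then 1/sp else 0) :: real^'d1)"
    define Hq where "Hq = (\<chi> k j. leaky sp sm ((W1q ** X) $ k $ j + b1q $ k))"
    have qeq: "q = (W1q, b1q, W2q, - bt)" unfolding q_def W1q_def b1q_def W2q_def ..
    have veq: "W2q v* Hq + (\<chi> j. - bt) - Y = e *\<^sub>R g - r"
    proof (subst vec_eq_iff, intro allI)
      fix j
      have "(\<Sum>k\<in>UNIV. W2q$k * Hq$k$j) = (\<Sum>k\<in>UNIV. if k = k2 then e * g$j else if k = k1 then yh$j + bt else 0)"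
      proof (rule sum.cong)
        fix k assume "k \<in> (UNIV::'d1 set)"
        show "W2q$k * Hq$k$j = (if k = k2 then e * g$j else if k = k1 then yh$j + bt else 0)"
        proof (cases "k = k2")
          case True
          have "z$j - t = (\<Sum>i\<in>UNIV. u$i * X$i$j) + (b0 - t)"
            by (simp add: z_def vector_matrix_mult_def)
          thus ?thesis using True by (simp add: W2q_def Hq_def g_def W1q_def b1q_def matrix_matrix_mult_def add_diff_eq)
        next
          case False
          show ?thesis
          proof (cases "k = k1")
            case True
            have pe: "(\<Sum>i\<in>UNIV. w0$i * X$i$j) + (c0 + bt) = yh$j + bt"
              by (simp add: yh_def vector_matrix_mult_def mult.commute)
            have L: "leaky sp sm ((\<Sum>i\<in>UNIV. w0$i * X$i$j) + (c0 + bt)) = sp * (yh$j + bt)"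
              unfolding pe using yhpos[of j] sp sm by (simp add: leaky_pos)
            show ?thesis using True False k12 sp
              by (simp add: W2q_def Hq_def W1q_def b1q_def matrix_matrix_mult_def L)
          next
            case nk1: False
            thus ?thesis using False by (simp add: W2q_def)
          qed
        qed
      qed simp
      also have "\<dots> = e * g$j + (yh$j + bt)" using k12 by (rule sum_two)
      finally have "(\<Sum>k\<in>UNIV. W2q$k * Hq$k$j) = e * g$j + (yh$j + bt)" .
      thus "(W2q v* Hq + (\<chi> j. - bt) - Y) $ j = (e *\<^sub>R g - r) $ j"
        by (simp add: vector_matrix_mult_def r_def)
    qed
    show ?thesis unfolding rsk_def qeq risk_def using veq by (simp add: Hq_def)
  qed
  hence rq: "rsk q < (1/2) * (norm r)\<^sup>2" using e by (simp add: power_strict_mono)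
  have inf_lt: "(INF q. rsk q) < (1/2) * (norm r)\<^sup>2"
  proof -
    have "(INF q. rsk q) \<le> rsk q" by (rule cINF_lower) (use rsk_nn in \<open>auto intro!: bdd_belowI[of _ 0]\<close>)
    thus ?thesis using rq by simp
  qed
  define P where "P = (\<lambda>n::nat. ((\<chi> k. w0) :: real^'dx^'d1, (\<chi> k. c0 + bt + real n) :: real^'d1,
                     (\<chi> k. 1 / (sp * real CARD('d1))) :: real^'d1, - (bt + real n)))"
  define U where "U = {q :: (real^'dx^'d1) \<times> (real^'d1) \<times> (real^'d1) \<times> real.
                \<forall>k j. 0 < (fst q ** X)$k$j + fst (snd q) $k}"
  have Uo: "open U" unfolding U_def by (rule open_region)
  have PU: "P n \<in> U" for n
  proof -
    have "0 < (w0 v* X)$j + c0 + bt + real n" for j using yhpos[of j] by (simp add: yh_def)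
    thus ?thesis by (simp add: U_def P_def matrix_matrix_mult_def vector_matrix_mult_def mult.commute add.assoc)
  qed
  have Urisk: "rsk q \<ge> (1/2) * (norm r)\<^sup>2" if "q \<in> U" for q
  proof -
    obtain W1 b1 W2 b2 where qq: "q = (W1, b1, W2, b2)" by (cases q) auto
    have "\<forall>k j. 0 < (W1 ** X)$k$j + b1$k" using that by (simp add: U_def qq)
    from lin_region[OF sp sm this] obtain w c where
      "rsk q = (1/2) * (norm (w v* X + (\<chi> j. c) - Y))\<^sup>2" unfolding rsk_def qq by blast
    moreover have "norm r \<le> norm (w v* X + (\<chi> j. c) - Y)" using wc0[of w c] nr by (simp add: yh_def)
    ultimately show ?thesis by (simp add: power_mono)
  qed
  have Prisk: "rsk (P n) = (1/2) * (norm r)\<^sup>2" for n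
  proof -
    have "\<forall>k j. 0 < (fst (P n) ** X)$k$j + fst (snd (P n)) $k" using PU[of n] by (simp add: U_def)
    hence pos: "\<forall>k j. 0 < (((\<chi> k. w0) :: real^'dx^'d1) ** X)$k$j + ((\<chi> k. c0 + bt + real n) :: real^'d1)$k" by (simp add: P_def)
    have "rsk (P n) = (1/2) * (norm (w0 v* X + (\<chi> j. c0) - Y))\<^sup>2"
      unfolding rsk_def P_def lin_region[OF sp sm pos] using sp
      by (simp add: vec_eq_iff vector_matrix_mult_def field_simps)
    thus ?thesis using nr by (simp add: yh_def)
  qed
  have good: "P n \<in> {p. is_spurious_local_min (risk (leaky sp sm) X Y) p
            \<and> risk (leaky sp sm) X Y p = ls_risk X Y}" for n
    unfolding is_spurious_local_min_def is_local_min_def rsk_def[symmetric] lsr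
  proof (intro CollectI conjI exI[of _ U])
    show "open U" "P n \<in> U" by (rule Uo, rule PU)
    show "\<forall>q\<in>U. rsk (P n) \<le> rsk q" 
    proof
      fix q assume "q \<in> U"
      from Urisk[OF this] show "rsk (P n) \<le> rsk q" using Prisk[of n] by linarith
    qed
    show "(INF q. rsk q) < rsk (P n)" "rsk (P n) = (1/2) * (norm r)\<^sup>2" using inf_lt Prisk[of n] by simp_all
  qed
  have "inj P"
  proof (rule injI)
    fix x y assume "P x = P y"
    hence "snd (snd (snd (P x))) = snd (snd (snd (P y)))" by simp
    thus "x = y" by (simp add: P_def)
  qed
  hence "infinite (range P)" by (rule range_inj_infinite)
  moreover have "range P \<subseteq> {p. is_spurious_local_min (risk (leaky sp sm) X Y) p
            \<and> risk (leaky sp sm) X Y p = ls_risk X Y}" using good by auto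
  ultimately show ?thesis by (rule infinite_super[rotated])
qed

end
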